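(* Let $\mathcal{X}$ be a covariate space with distribution $P_X$, $\mathcal{F}$ an eligible set of prediction rules with evaluation distribution $\lambda_{\mathcal{F}}$, $\mathcal{F}_\Theta=\{f_\theta:\theta\in\Theta\}$ a model class and $f_{\mathrm{base}}$ a baseline rule. Suppose that for $\lambda_{\mathcal{F}}$-a.e. $f$, $d(f_\theta,f)=\mathbb{E}_{P_X}[g(X,\theta;f)]$ and $d(f_{\mathrm{base}},f)=\mathbb{E}_{P_X}[g_{\mathrm{base}}(X;f)]$ for measurable $g,g_{\mathrm{base}}$, with $\sup_{\theta,f}\mathbb{E}[g(X,\theta;f)^{2+\epsilon}]<\infty$ and $\sup_f\mathbb{E}[g_{\mathrm{base}}(X;f)^{2+\epsilon}]<\infty$ for some $\epsilon>0$. Let $d(\mathcal{F}_\Theta,f):=\inf_\theta d(f_\theta,f)$, and given an i.i.d. sample $X_1,\dots,X_n\sim P_X$ define $d_n(f_\theta,f):=\frac1n\sum_i g(X_i,\theta;f)$, $d_n(\mathcal{F}_\Theta,f):=\inf_\theta d_n(f_\theta,f)$, $d_n(f_{\mathrm{base}},f):=\frac1n\sum_i g_{\mathrm{base}}(X_i;f)$. Assume (asymptotic linearity) that for $\lambda_{\mathcal{F}}$-a.e. $f$ there is a measurable $\phi_1(\cdot;f)$ with $\mathbb{E}[\phi_1(X;f)]=0$, $\mathbb{E}[\phi_1(X;f)^2]<\infty$, and $d_n(\mathcal{F}_\Theta,f)-d(\mathcal{F}_\Theta,f)=\frac1n\sum_{i=1}^n\phi_1(X_i;f)+o_p(n^{-1/2})$.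 Fix $M\ge1$ and draws $f_1,\dots,f_M$ i.i.d. from $\lambda_{\mathcal{F}}$, independent of the sample. Define $\mu_{1,M}:=\frac1M\sum_m d(\mathcal{F}_\Theta,f_m)$, $\mu_{0,M}:=\frac1M\sum_m d(f_{\mathrm{base}},f_m)$ (assumed $>0$), $r_M:=\mu_{1,M}/\mu_{0,M}$, and $\widehat r_{n,M}:=\frac{\frac1M\sum_m d_n(\mathcal{F}_\Theta,f_m)}{\frac1M\sum_m d_n(f_{\mathrm{base}},f_m)}$. Let $\phi_0(x;f):=g_{\mathrm{base}}(x;f)-d(f_{\mathrm{base}},f)$, $\Phi^{(k)}(x):=\frac1M\sum_m\phi_k(x;f_m)$ for $k=0,1$, and $\psi_M(x):=\frac{1}{\mu_{0,M}}\big(\Phi^{(1)}(x)-r_M\Phi^{(0)}(x)\big)$. Then, conditional on $(f_1,\dots,f_M)$, as $n\to\infty$, \[ \sqrt{n}\big(\widehat r_{n,M}-r_M\big)\xrightarrow{d}N(0,\sigma_M^2),\qquad \sigma_M^2:=\mathrm{Var}\big(\psi_M(X_1)\big). \]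
   Context: $d$ is a discrepancy between prediction rules; restrictiveness is the ratio of expected model discrepancy to expected baseline discrepancy under $\lambda_{\mathcal{F}}$, and $\widehat r_{n,M}$ is its Monte Carlo/sample-analog estimator. *)

theory Defs
  imports "HOL-Probability.Probability"
begin

text \<open>Prediction rules live in type 'f; d is a discrepancy between rules;
 ftheta parametrises the model class F_Theta (parameters of type 't).\<close>

definition dF :: "('f \<Rightarrow> 'f \<Rightarrow> real) \<Rightarrow> ('t \<Rightarrow> 'f) \<Rightarrow> 'f \<Rightarrow> real" where
  "dF d ftheta f = (INF \<theta>. d (ftheta \<theta>) f)"

definition dn :: "('x \<Rightarrow> 't \<Rightarrow> 'f \<Rightarrow> real) \<Rightarrow> (nat \<Rightarrow> 'w \<Rightarrow> 'x) \<Rightarrow> nat \<Rightarrow> 't \<Rightarrow> 'f \<Rightarrow> 'w \<Rightarrow> real" where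
  "dn g X n \<theta> f \<omega> = (\<Sum>i<n. g (X i \<omega>) \<theta> f) / real n"

definition dnF :: "('x \<Rightarrow> 't \<Rightarrow> 'f \<Rightarrow> real) \<Rightarrow> (nat \<Rightarrow> 'w \<Rightarrow> 'x) \<Rightarrow> nat \<Rightarrow> 'f \<Rightarrow> 'w \<Rightarrow> real" where
  "dnF g X n f \<omega> = (INF \<theta>. dn g X n \<theta> f \<omega>)"

definition dn_base :: "('x \<Rightarrow> 'f \<Rightarrow> real) \<Rightarrow> (nat \<Rightarrow> 'w \<Rightarrow> 'x) \<Rightarrow> nat \<Rightarrow> 'f \<Rightarrow> 'w \<Rightarrow> real" where
  "dn_base gbase X n f \<omega> = (\<Sum>i<n. gbase (X i \<omega>) f) / real n"

definition mu1 :: "('f \<Rightarrow> 'f \<Rightarrow> real) \<Rightarrow> ('t \<Rightarrow> 'f) \<Rightarrow> nat \<Rightarrow> (nat \<Rightarrow> 'f) \<Rightarrow> real" where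
  "mu1 d ftheta M fs = (\<Sum>m<M. dF d ftheta (fs m)) / real M"

definition mu0 :: "('f \<Rightarrow> 'f \<Rightarrow> real) \<Rightarrow> 'f \<Rightarrow> nat \<Rightarrow> (nat \<Rightarrow> 'f) \<Rightarrow> real" where
  "mu0 d fbase M fs = (\<Sum>m<M. d fbase (fs m)) / real M"

definition rM :: "('f \<Rightarrow> 'f \<Rightarrow> real) \<Rightarrow> ('t \<Rightarrow> 'f) \<Rightarrow> 'f \<Rightarrow> nat \<Rightarrow> (nat \<Rightarrow> 'f) \<Rightarrow> real" where
  "rM d ftheta fbase M fs = mu1 d ftheta M fs / mu0 d fbase M fs"

definition rhat :: "('x \<Rightarrow> 't \<Rightarrow> 'f \<Rightarrow> real) \<Rightarrow> ('x \<Rightarrow> 'f \<Rightarrow> real) \<Rightarrow> (nat \<Rightarrow> 'w \<Rightarrow> 'x)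
    \<Rightarrow> nat \<Rightarrow> (nat \<Rightarrow> 'f) \<Rightarrow> nat \<Rightarrow> 'w \<Rightarrow> real" where
  "rhat g gbase X M fs n \<omega> =
     ((\<Sum>m<M. dnF g X n (fs m) \<omega>) / real M) / ((\<Sum>m<M. dn_base gbase X n (fs m) \<omega>) / real M)"

definition phi0 :: "('x \<Rightarrow> 'f \<Rightarrow> real) \<Rightarrow> ('f \<Rightarrow> 'f \<Rightarrow> real) \<Rightarrow> 'f \<Rightarrow> 'x \<Rightarrow> 'f \<Rightarrow> real" where
  "phi0 gbase d fbase x f = gbase x f - d fbase f"

definition Phi :: "('x \<Rightarrow> 'f \<Rightarrow> real) \<Rightarrow> nat \<Rightarrow> (nat \<Rightarrow> 'f) \<Rightarrow> 'x \<Rightarrow> real" where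
  "Phi phi M fs x = (\<Sum>m<M. phi x (fs m)) / real M"

definition psiM :: "('x \<Rightarrow> 'f \<Rightarrow> real) \<Rightarrow> ('x \<Rightarrow> 'f \<Rightarrow> real) \<Rightarrow> ('f \<Rightarrow> 'f \<Rightarrow> real) \<Rightarrow> ('t \<Rightarrow> 'f) \<Rightarrow> 'f
    \<Rightarrow> nat \<Rightarrow> (nat \<Rightarrow> 'f) \<Rightarrow> 'x \<Rightarrow> real" where
  "psiM phi1 gbase d ftheta fbase M fs x =
     (Phi phi1 M fs x - rM d ftheta fbase M fs * Phi (phi0 gbase d fbase) M fs x) / mu0 d fbase M fs"

definition var_of :: "'x measure \<Rightarrow> ('x \<Rightarrow> real) \<Rightarrow> real" where
  "var_of P \<psi> = (\<integral>x. (\<psi> x - (\<integral>y. \<psi> y \<partial>P))\<^sup>2 \<partial>P)"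

definition conv_in_prob :: "'w measure \<Rightarrow> (nat \<Rightarrow> 'w \<Rightarrow> real) \<Rightarrow> real \<Rightarrow> bool" where
  "conv_in_prob \<Omega> Y c \<longleftrightarrow>
     (\<forall>e>0. (\<lambda>n. measure \<Omega> {\<omega> \<in> space \<Omega>. \<bar>Y n \<omega> - c\<bar> > e}) \<longlonglongrightarrow> 0)"

text \<open>N(0, s2) as the law of sqrt s2 * Z with Z standard normal (covers s2 = 0).\<close>
definition normal_law :: "real \<Rightarrow> real measure" where
  "normal_law s2 = distr (density lborel std_normal_density) borel (\<lambda>z. sqrt s2 * z)"

definition conv_in_distr :: "'w measure \<Rightarrow> (nat \<Rightarrow> 'w \<Rightarrow> real) \<Rightarrow> real measure \<Rightarrow> bool" where
  "conv_in_distr \<Omega> Y L \<longleftrightarrow> weak_conv_m (\<lambda>n. distr \<Omega> borel (Y n)) L"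

end

theory Submission
  imports Defs
begin

lemma (in prob_space) cheb_simple:
  fixes f :: "'a \<Rightarrow> real"
  assumes [measurable]: "f \<in> borel_measurable M" and int: "integrable M (\<lambda>x. (f x)\<^sup>2)" and a: "a > 0"
  shows "prob {x\<in>space M. a < \<bar>f x\<bar>} \<le> expectation (\<lambda>x. (f x)\<^sup>2) / a\<^sup>2"
proof -
  have "a\<^sup>2 * prob {x\<in>space M. a < \<bar>f x\<bar>} = (\<integral>x. a\<^sup>2 * indicator {x\<in>space M. a < \<bar>f x\<bar>} x \<partial>M)"
    by simp
  also have "\<dots> \<le> expectation (\<lambda>x. (f x)\<^sup>2)"
  proof (rule integral_mono)
    show "integrable M (\<lambda>x. a\<^sup>2 * indicator {x \<in> space M. a < \<bar>f x\<bar>} x)"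
      by (intro integrable_mult_right integrable_real_indicator) (auto simp: emeasure_eq_measure)
    fix x assume "x \<in> space M"
    show "a\<^sup>2 * indicator {x \<in> space M. a < \<bar>f x\<bar>} x \<le> (f x)\<^sup>2"
    proof (cases "a < \<bar>f x\<bar>")
      case True
      then have "a\<^sup>2 \<le> \<bar>f x\<bar>\<^sup>2" using a by (intro power_mono) auto
      then show ?thesis using True \<open>x \<in> space M\<close> by (simp add: indicator_def)
    qed (simp add: indicator_def)
  qed (rule int)
  finally show ?thesis using a by (simp add: field_simps)
qed

lemma sq_int_add:
  fixes f g :: "'a \<Rightarrow> real"
  assumes [measurable]: "f \<in> borel_measurable M" "g \<in> borel_measurable M"
    and "integrable M (\<lambda>x. (f x)\<^sup>2)" "integrable M (\<lambda>x. (g x)\<^sup>2)"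
  shows "integrable M (\<lambda>x. (f x + g x)\<^sup>2)"
proof (rule Bochner_Integration.integrable_bound)
  show "integrable M (\<lambda>x. 2 * (f x)\<^sup>2 + 2 * (g x)\<^sup>2)" using assms by auto
  show "(\<lambda>x. (f x + g x)\<^sup>2) \<in> borel_measurable M" by measurable
  show "AE x in M. norm ((f x + g x)\<^sup>2) \<le> norm (2 * (f x)\<^sup>2 + 2 * (g x)\<^sup>2)"
  proof (rule AE_I2)
    fix x
    have "0 \<le> (f x - g x)\<^sup>2" by simp
    then have "(f x + g x)\<^sup>2 \<le> 2 * (f x)\<^sup>2 + 2 * (g x)\<^sup>2"
      by (simp add: power2_eq_square algebra_simps)
    then show "norm ((f x + g x)\<^sup>2) \<le> norm (2 * (f x)\<^sup>2 + 2 * (g x)\<^sup>2)"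
      by simp
  qed
qed

lemma sq_int_sum:
  fixes f :: "'i \<Rightarrow> 'a \<Rightarrow> real"
  assumes "finite I" "\<And>i. i \<in> I \<Longrightarrow> f i \<in> borel_measurable M"
    "\<And>i. i \<in> I \<Longrightarrow> integrable M (\<lambda>x. (f i x)\<^sup>2)"
  shows "integrable M (\<lambda>x. (\<Sum>i\<in>I. f i x)\<^sup>2)"
  using assms
proof (induction I rule: finite_induct)
  case empty then show ?case by simp
next
  case (insert j I)
  have m: "(\<lambda>x. \<Sum>i\<in>I. f i x) \<in> borel_measurable M"
    using insert by (intro borel_measurable_sum) auto
  have "integrable M (\<lambda>x. (f j x + (\<Sum>i\<in>I. f i x))\<^sup>2)"
    using insert by (intro sq_int_add[OF _ m]) auto
  then show ?case using insert by (simp add: sum.insert)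
qed

lemma sq_int_cmult:
  fixes f :: "'a \<Rightarrow> real"
  assumes "integrable M (\<lambda>x. (f x)\<^sup>2)"
  shows "integrable M (\<lambda>x. (c * f x)\<^sup>2)"
  using integrable_mult_right[OF assms, of "c\<^sup>2"] by (simp add: power_mult_distrib)

lemma powr_sq_int:
  fixes f :: "'a \<Rightarrow> real"
  assumes [measurable]: "f \<in> borel_measurable M" and "finite_measure M"
    and int: "integrable M (\<lambda>x. \<bar>f x\<bar> powr (2 + e))" and e: "e > 0"
  shows "integrable M (\<lambda>x. (f x)\<^sup>2)"
proof (rule Bochner_Integration.integrable_bound)
  interpret finite_measure M by fact
  show "integrable M (\<lambda>x. 1 + \<bar>f x\<bar> powr (2 + e))" using int by auto
  show "(\<lambda>x. (f x)\<^sup>2) \<in> borel_measurable M" by measurable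
  show "AE x in M. norm ((f x)\<^sup>2) \<le> norm (1 + \<bar>f x\<bar> powr (2 + e))"
  proof (rule AE_I2)
    fix x
    show "norm ((f x)\<^sup>2) \<le> norm (1 + \<bar>f x\<bar> powr (2 + e))"
    proof (cases "\<bar>f x\<bar> \<le> 1")
      case True
      then have "(f x)\<^sup>2 \<le> 1"
        by (metis abs_le_square_iff abs_one one_power2)
      moreover have "0 \<le> \<bar>f x\<bar> powr (2 + e)" by simp
      ultimately show ?thesis by (simp del: powr_ge_zero)
    next
      case False
      have "(f x)\<^sup>2 = \<bar>f x\<bar> powr 2" using False
        by (simp add: powr_numeral)
      also have "\<dots> \<le> \<bar>f x\<bar> powr (2 + e)" using False e
        by (intro powr_mono) auto
      finally show ?thesis by simp
    qed
  qed
qed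

lemma (in prob_space) iid_sum_sq:
  fixes \<psi> :: "'x \<Rightarrow> real" and X :: "nat \<Rightarrow> 'a \<Rightarrow> 'x"
  assumes indep: "indep_vars (\<lambda>_. PX) X UNIV"
    and ident: "\<forall>i. distr M PX (X i) = PX"
    and [measurable]: "\<psi> \<in> borel_measurable PX"
    and sq: "integrable PX (\<lambda>x. (\<psi> x)\<^sup>2)" and mean: "(\<integral>x. \<psi> x \<partial>PX) = 0"
  shows "integrable M (\<lambda>\<omega>. (\<Sum>i<n. \<psi> (X i \<omega>))\<^sup>2)"
    and "expectation (\<lambda>\<omega>. (\<Sum>i<n. \<psi> (X i \<omega>))\<^sup>2) = real n * (\<integral>x. (\<psi> x)\<^sup>2 \<partial>PX)"
proof -
  have Xm[measurable]: "X i \<in> measurable M PX" for i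
    using indep unfolding indep_vars_def2 by auto
  define Z where "Z i \<omega> = \<psi> (X i \<omega>)" for i \<omega>
  have Zm[measurable]: "Z i \<in> borel_measurable M" for i unfolding Z_def by measurable
  have Zind: "indep_vars (\<lambda>_. borel) Z UNIV"
    unfolding Z_def by (rule indep_vars_compose2[OF indep]) auto
  have PXeq: "PX = distr M PX (X i)" for i using ident by simp
  have psi_int: "integrable PX \<psi>"
  proof -
    interpret P: prob_space PX using PXeq[of 0] prob_space_distr Xm by metis
    show ?thesis by (rule P.square_integrable_imp_integrable) (auto simp: sq)
  qed
  have Zsq: "integrable M (\<lambda>\<omega>. (Z i \<omega>)\<^sup>2)" for i
    using sq unfolding Z_def by (subst (asm) PXeq[of i]) (simp add: integrable_distr_eq)
  have Zint: "integrable M (Z i)" for i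
    using psi_int unfolding Z_def by (subst (asm) PXeq[of i]) (simp add: integrable_distr_eq)
  have Zmean: "expectation (Z i) = 0" for i
    using mean unfolding Z_def by (subst (asm) PXeq[of i]) (simp add: integral_distr)
  have Zsqmean: "expectation (\<lambda>\<omega>. (Z i \<omega>)\<^sup>2) = (\<integral>x. (\<psi> x)\<^sup>2 \<partial>PX)" for i
    unfolding Z_def by (subst PXeq[of i]) (simp add: integral_distr)
  have cross: "integrable M (\<lambda>\<omega>. Z i \<omega> * Z j \<omega>) \<and>
      expectation (\<lambda>\<omega>. Z i \<omega> * Z j \<omega>) = (if i = j then (\<integral>x. (\<psi> x)\<^sup>2 \<partial>PX) else 0)" for i j
  proof (cases "i = j")
    case True then show ?thesis using Zsq[of i] Zsqmean[of i] by (simp add: power2_eq_square)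
  next
    case False
    have ind2: "indep_vars (\<lambda>_. borel) Z {i, j}"
      by (rule indep_vars_subset[OF Zind]) auto
    have "(\<lambda>\<omega>. Z i \<omega> * Z j \<omega>) = (\<lambda>\<omega>. \<Prod>k\<in>{i,j}. Z k \<omega>)" using False by auto
    moreover have "integrable M (\<lambda>\<omega>. \<Prod>k\<in>{i,j}. Z k \<omega>)"
      by (rule indep_vars_integrable[OF _ ind2]) (auto simp: Zint)
    moreover have "expectation (\<lambda>\<omega>. \<Prod>k\<in>{i,j}. Z k \<omega>) = (\<Prod>k\<in>{i,j}. expectation (Z k))"
      by (rule indep_vars_lebesgue_integral[OF _ ind2]) (auto simp: Zint)
    ultimately show ?thesis using False Zmean by simp
  qed
  have eq: "(\<lambda>\<omega>. (\<Sum>i<n. \<psi> (X i \<omega>))\<^sup>2) = (\<lambda>\<omega>. \<Sum>i<n. \<Sum>j<n. Z i \<omega> * Z j \<omega>)"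
    by (auto simp: Z_def power2_eq_square sum_product)
  show "integrable M (\<lambda>\<omega>. (\<Sum>i<n. \<psi> (X i \<omega>))\<^sup>2)"
    unfolding eq using cross by auto
  have "expectation (\<lambda>\<omega>. \<Sum>i<n. \<Sum>j<n. Z i \<omega> * Z j \<omega>)
      = (\<Sum>i<n. \<Sum>j<n. expectation (\<lambda>\<omega>. Z i \<omega> * Z j \<omega>))"
    using cross by (simp add: Bochner_Integration.integral_sum)
  also have "\<dots> = (\<Sum>i<n. \<Sum>j<n. (if i = j then (\<integral>x. (\<psi> x)\<^sup>2 \<partial>PX) else 0))"
    using cross by simp
  also have "\<dots> = real n * (\<integral>x. (\<psi> x)\<^sup>2 \<partial>PX)"
    by (simp add: sum.delta)
  finally show "expectation (\<lambda>\<omega>. (\<Sum>i<n. \<psi> (X i \<omega>))\<^sup>2) = real n * (\<integral>x. (\<psi> x)\<^sup>2 \<partial>PX)"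
    unfolding eq .
qed

lemma cts_step_lip:
  assumes "x < y"
  shows "\<bar>cts_step x y a - cts_step x y b\<bar> \<le> \<bar>a - b\<bar> / (y - x)"
proof -
  have eq: "cts_step x y t = max 0 (min 1 ((y - t) / (y - x)))" for t
  proof -
    have d: "y - x > 0" using assms by simp
    show ?thesis
    proof (cases "t \<le> x")
      case True
      then have "(y - t) / (y - x) \<ge> 1" using d by (simp add: le_divide_eq)
      then show ?thesis using True by (simp add: cts_step_def)
    next
      case F1: False
      show ?thesis
      proof (cases "t \<ge> y")
        case True
        then have "(y - t) / (y - x) \<le> 0" using d by (simp add: divide_le_0_iff)
        then show ?thesis using True F1 by (simp add: cts_step_def)
      next
        case False
        then have "(y - t) / (y - x) \<le> 1" "(y - t) / (y - x) \<ge> 0" using d F1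
          by (simp_all add: divide_le_eq)
        then show ?thesis using False F1 by (simp add: cts_step_def)
      qed
    qed
  qed
  have cl: "\<bar>max 0 (min 1 u) - max 0 (min 1 v)\<bar> \<le> \<bar>u - v\<bar>" for u v :: real
    by (simp add: max_def min_def abs_if split: if_splits)
  have e1: "(y - a) / (y - x) - (y - b) / (y - x) = (b - a) / (y - x)"
    by (simp add: diff_divide_distrib)
  have "\<bar>(b - a) / (y - x)\<bar> = \<bar>b - a\<bar> / (y - x)"
    using assms by (simp add: abs_divide)
  also have "\<bar>b - a\<bar> = \<bar>a - b\<bar>" by (rule abs_minus_commute)
  finally have "\<bar>(y - a) / (y - x) - (y - b) / (y - x)\<bar> = \<bar>a - b\<bar> / (y - x)"
    unfolding e1 .
  moreover have "\<bar>max 0 (min 1 ((y - a) / (y - x))) - max 0 (min 1 ((y - b) / (y - x)))\<bar>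
     \<le> \<bar>(y - a) / (y - x) - (y - b) / (y - x)\<bar>" by (rule cl)
  ultimately show ?thesis unfolding eq by simp
qed

lemma cts_step_bnd: "x < y \<Longrightarrow> 0 \<le> cts_step x y a \<and> cts_step x y a \<le> 1"
  by (auto simp: cts_step_def field_simps)

lemma cts_step_cont: "x < y \<Longrightarrow> isCont (cts_step x y) a"
  by (rule continuous_on_interior[of UNIV]) (auto intro: uniformly_continuous_imp_continuous cts_step_uniformly_continuous)

lemma slutsky:
  fixes A Y :: "nat \<Rightarrow> 'w \<Rightarrow> real"
  assumes \<Omega>: "prob_space \<Omega>" and L: "real_distribution L"
    and Am[measurable]: "\<And>n. A n \<in> borel_measurable \<Omega>"
    and Ym[measurable]: "\<And>n. Y n \<in> borel_measurable \<Omega>"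
    and conv: "\<And>h :: real \<Rightarrow> real. (\<And>x. isCont h x) \<Longrightarrow> (\<And>x. \<bar>h x\<bar> \<le> 1) \<Longrightarrow>
                 (\<lambda>n. \<integral>\<omega>. h (A n \<omega>) \<partial>\<Omega>) \<longlonglongrightarrow> (\<integral>x. h x \<partial>L)"
    and small: "conv_in_prob \<Omega> (\<lambda>n \<omega>. Y n \<omega> - A n \<omega>) 0"
  shows "conv_in_distr \<Omega> Y L"
proof -
  interpret prob_space \<Omega> by fact
  show ?thesis unfolding conv_in_distr_def
  proof (rule integral_cts_step_conv_imp_weak_conv)
    show "real_distribution (distr \<Omega> borel (Y n))" for n by simp
    show "real_distribution L" by fact
    fix x y :: real assume xy: "x < y"
    let ?h = "cts_step x y"
    have hm[measurable]: "?h \<in> borel_measurable borel"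
      by (intro borel_measurable_continuous_onI continuous_at_imp_continuous_on ballI cts_step_cont xy)
    have hint: "integrable \<Omega> (\<lambda>\<omega>. ?h (Z \<omega>))" if [measurable]: "Z \<in> borel_measurable \<Omega>" for Z
      by (rule integrable_const_bound[where B=1]) (auto simp: cts_step_bnd[OF xy] abs_le_iff)
    have eqY: "integral\<^sup>L (distr \<Omega> borel (Y n)) ?h = (\<integral>\<omega>. ?h (Y n \<omega>) \<partial>\<Omega>)" for n
      by (simp add: integral_distr)
    have c1: "(\<lambda>n. \<integral>\<omega>. ?h (A n \<omega>) \<partial>\<Omega>) \<longlonglongrightarrow> integral\<^sup>L L ?h"
    proof -
      have b: "\<bar>?h t\<bar> \<le> 1" for t using cts_step_bnd[OF xy, of t] by simp
      show ?thesis using conv[of ?h, OF cts_step_cont[OF xy] b] by simp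
    qed
    have c2: "(\<lambda>n. (\<integral>\<omega>. ?h (Y n \<omega>) \<partial>\<Omega>) - (\<integral>\<omega>. ?h (A n \<omega>) \<partial>\<Omega>)) \<longlonglongrightarrow> 0"
    proof (rule tendsto_iff[THEN iffD2], intro allI impI)
      fix \<epsilon> :: real assume \<epsilon>: "\<epsilon> > 0"
      define \<delta> where "\<delta> = (y - x) * \<epsilon> / 2"
      have \<delta>: "\<delta> > 0" using xy \<epsilon> by (simp add: \<delta>_def)
      have "(\<lambda>n. measure \<Omega> {\<omega> \<in> space \<Omega>. \<bar>Y n \<omega> - A n \<omega> - 0\<bar> > \<delta>}) \<longlonglongrightarrow> 0"
        using small \<delta> unfolding conv_in_prob_def by blast
      then have ev: "eventually (\<lambda>n. measure \<Omega> {\<omega> \<in> space \<Omega>. \<bar>Y n \<omega> - A n \<omega> - 0\<bar> > \<delta>} < \<epsilon> / 2) sequentially"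
        using \<epsilon> by (auto simp: tendsto_iff dist_real_def dest!: spec[of _ "\<epsilon>/2"])
      show "eventually (\<lambda>n. dist ((\<integral>\<omega>. ?h (Y n \<omega>) \<partial>\<Omega>) - (\<integral>\<omega>. ?h (A n \<omega>) \<partial>\<Omega>)) 0 < \<epsilon>) sequentially"
        using ev
      proof eventually_elim
        case (elim n)
        define S where "S = {\<omega> \<in> space \<Omega>. \<bar>Y n \<omega> - A n \<omega> - 0\<bar> > \<delta>}"
        have Sm: "S \<in> sets \<Omega>" unfolding S_def by measurable
        have "\<bar>(\<integral>\<omega>. ?h (Y n \<omega>) \<partial>\<Omega>) - (\<integral>\<omega>. ?h (A n \<omega>) \<partial>\<Omega>)\<bar>
              = \<bar>\<integral>\<omega>. ?h (Y n \<omega>) - ?h (A n \<omega>) \<partial>\<Omega>\<bar>"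
          using hint[of "Y n"] hint[of "A n"] by simp
        also have "\<dots> \<le> (\<integral>\<omega>. \<bar>?h (Y n \<omega>) - ?h (A n \<omega>)\<bar> \<partial>\<Omega>)"
          by (rule integral_abs_bound)
        also have "\<dots> \<le> (\<integral>\<omega>. \<epsilon> / 2 + indicator S \<omega> \<partial>\<Omega>)"
        proof (rule integral_mono)
          show "integrable \<Omega> (\<lambda>\<omega>. \<bar>?h (Y n \<omega>) - ?h (A n \<omega>)\<bar>)"
            using hint[of "Y n"] hint[of "A n"] by simp
          show "integrable \<Omega> (\<lambda>\<omega>. \<epsilon> / 2 + indicator S \<omega>)"
            using Sm by (intro Bochner_Integration.integrable_add) (auto simp: emeasure_eq_measure)
          fix \<omega> assume \<omega>: "\<omega> \<in> space \<Omega>"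
          show "\<bar>?h (Y n \<omega>) - ?h (A n \<omega>)\<bar> \<le> \<epsilon> / 2 + indicator S \<omega>"
          proof (cases "\<omega> \<in> S")
            case True
            have "\<bar>?h (Y n \<omega>) - ?h (A n \<omega>)\<bar> \<le> 1"
              using cts_step_bnd[OF xy, of "Y n \<omega>"] cts_step_bnd[OF xy, of "A n \<omega>"] by linarith
            then show ?thesis using True \<epsilon> by simp
          next
            case False
            then have "\<bar>Y n \<omega> - A n \<omega>\<bar> \<le> \<delta>" using \<omega> by (simp add: S_def)
            then have "\<bar>Y n \<omega> - A n \<omega>\<bar> / (y - x) \<le> \<epsilon> / 2"
              using xy by (simp add: \<delta>_def divide_le_eq mult.commute)
            then have "\<bar>?h (Y n \<omega>) - ?h (A n \<omega>)\<bar> \<le> \<epsilon> / 2"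
              using cts_step_lip[OF xy, of "Y n \<omega>" "A n \<omega>"] by linarith
            then show ?thesis using False by simp
          qed
        qed
        also have "\<dots> = \<epsilon> / 2 + measure \<Omega> S"
          using Sm by (subst Bochner_Integration.integral_add) (auto simp: prob_space emeasure_eq_measure)
        also have "\<dots> < \<epsilon>" using elim by (simp add: S_def)
        finally show ?case by (simp add: dist_real_def)
      qed
    qed
    show "(\<lambda>n. integral\<^sup>L (distr \<Omega> borel (Y n)) ?h) \<longlonglongrightarrow> integral\<^sup>L L ?h"
      unfolding eqY using tendsto_add[OF c2 c1] by simp
  qed
qed

lemma std_normal_ps: "prob_space std_normal_distribution"
  using real_dist_normal_dist by (simp add: real_distribution_def)

lemma normal_law_rd: "real_distribution (normal_law s2)"
  unfolding normal_law_def
  by (rule prob_space.real_distribution_distr[OF std_normal_ps]) simp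

lemma integral_normal_law:
  fixes h :: "real \<Rightarrow> real"
  assumes [measurable]: "h \<in> borel_measurable borel"
  shows "(\<integral>x. h x \<partial>normal_law s2) = (\<integral>z. h (sqrt s2 * z) \<partial>std_normal_distribution)"
  unfolding normal_law_def by (subst integral_distr) auto

lemma (in prob_space) clt_psi:
  fixes \<psi> :: "'x \<Rightarrow> real" and X :: "nat \<Rightarrow> 'a \<Rightarrow> 'x" and h :: "real \<Rightarrow> real"
  assumes indep: "indep_vars (\<lambda>_. PX) X UNIV"
    and ident: "\<forall>i. distr M PX (X i) = PX"
    and [measurable]: "\<psi> \<in> borel_measurable PX"
    and sq: "integrable PX (\<lambda>x. (\<psi> x)\<^sup>2)" and mean: "(\<integral>x. \<psi> x \<partial>PX) = 0"
    and hc: "\<And>x. isCont h x" and hb: "\<And>x. \<bar>h x\<bar> \<le> 1"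
  shows "(\<lambda>n. \<integral>\<omega>. h ((\<Sum>i<n. \<psi> (X i \<omega>)) / sqrt (real n)) \<partial>M)
           \<longlonglongrightarrow> (\<integral>x. h x \<partial>normal_law (\<integral>x. (\<psi> x)\<^sup>2 \<partial>PX))"
proof -
  have Xm[measurable]: "X i \<in> measurable M PX" for i
    using indep unfolding indep_vars_def2 by auto
  have hm[measurable]: "h \<in> borel_measurable borel"
    by (intro borel_measurable_continuous_onI continuous_at_imp_continuous_on ballI hc)
  define s2 where "s2 = (\<integral>x. (\<psi> x)\<^sup>2 \<partial>PX)"
  define Z where "Z i \<omega> = \<psi> (X i \<omega>)" for i \<omega>
  have Zm[measurable]: "Z i \<in> borel_measurable M" for i unfolding Z_def by measurable
  have Zind: "indep_vars (\<lambda>_. borel) Z UNIV"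
    unfolding Z_def by (rule indep_vars_compose2[OF indep]) auto
  have PXeq: "PX = distr M PX (X i)" for i using ident by simp
  interpret P: prob_space PX using PXeq[of 0] prob_space_distr Xm by metis
  have psi_int: "integrable PX \<psi>"
    by (rule P.square_integrable_imp_integrable) (auto simp: sq)
  have Zsq: "integrable M (\<lambda>\<omega>. (Z i \<omega>)\<^sup>2)" for i
    using sq unfolding Z_def by (subst (asm) PXeq[of i]) (simp add: integrable_distr_eq)
  have Zmean: "expectation (Z i) = 0" for i
    using mean unfolding Z_def by (subst (asm) PXeq[of i]) (simp add: integral_distr)
  have Zsqmean: "expectation (\<lambda>\<omega>. (Z i \<omega>)\<^sup>2) = s2" for i
    unfolding Z_def s2_def by (subst PXeq[of i]) (simp add: integral_distr)
  have Zdistr: "distr M borel (Z i) = distr PX borel \<psi>" for i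
    unfolding Z_def by (subst PXeq[of i]) (simp add: distr_distr comp_def)
  have s2nn: "s2 \<ge> 0" unfolding s2_def by simp
  show ?thesis
  proof (cases "s2 = 0")
    case True
    have AE0: "AE \<omega> in M. (\<Sum>i<n. \<psi> (X i \<omega>)) = 0" for n
    proof -
      have "expectation (\<lambda>\<omega>. (\<Sum>i<n. \<psi> (X i \<omega>))\<^sup>2) = 0"
        using iid_sum_sq(2)[OF indep ident _ sq mean] True by (simp add: s2_def)
      then have "AE \<omega> in M. (\<Sum>i<n. \<psi> (X i \<omega>))\<^sup>2 = 0"
        using iid_sum_sq(1)[OF indep ident _ sq mean]
        by (subst (asm) integral_nonneg_eq_0_iff_AE) auto
      then show ?thesis by simp
    qed
    have "(\<integral>\<omega>. h ((\<Sum>i<n. \<psi> (X i \<omega>)) / sqrt (real n)) \<partial>M) = h 0" for n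
    proof -
      have "(\<integral>\<omega>. h ((\<Sum>i<n. \<psi> (X i \<omega>)) / sqrt (real n)) \<partial>M) = (\<integral>\<omega>. h 0 \<partial>M)"
        by (rule integral_cong_AE) (use AE0[of n] in auto)
      then show ?thesis by (simp add: prob_space)
    qed
    moreover have "(\<integral>x. h x \<partial>normal_law s2) = h 0"
    proof -
      have "measure std_normal_distribution UNIV = 1"
        using prob_space.prob_space[OF std_normal_ps] by simp
      then show ?thesis using True by (simp add: integral_normal_law)
    qed
    ultimately show ?thesis by (simp add: s2_def[symmetric])
  next
    case False
    then have s2p: "s2 > 0" using s2nn by simp
    define \<sigma> where "\<sigma> = sqrt s2"
    have \<sigma>p: "\<sigma> > 0" using s2p by (simp add: \<sigma>_def)
    have \<sigma>sq: "\<sigma>\<^sup>2 = s2" using s2nn by (simp add: \<sigma>_def)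
    have clt: "weak_conv_m (\<lambda>n. distr M borel (\<lambda>x. (\<Sum>i<n. Z i x) / sqrt (real n * \<sigma>\<^sup>2))) std_normal_distribution"
    proof (rule central_limit_theorem_zero_mean[OF Zind Zmean \<sigma>p Zsq])
      show "variance (Z n) = \<sigma>\<^sup>2" for n using Zmean Zsqmean \<sigma>sq by simp
      show "distr M borel (Z n) = distr PX borel \<psi>" for n by (rule Zdistr)
    qed
    let ?h = "\<lambda>z. h (\<sigma> * z)"
    have "(\<lambda>n. integral\<^sup>L (distr M borel (\<lambda>x. (\<Sum>i<n. Z i x) / sqrt (real n * \<sigma>\<^sup>2))) ?h)
          \<longlonglongrightarrow> integral\<^sup>L std_normal_distribution ?h"
    proof (rule weak_conv_imp_integral_bdd_continuous_conv[OF _ real_dist_normal_dist clt])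
      show "real_distribution (distr M borel (\<lambda>x. (\<Sum>i<n. Z i x) / sqrt (real n * \<sigma>\<^sup>2)))" for n
        by simp
      show "isCont ?h x" for x
        by (rule continuous_intros hc[THEN isCont_o2[rotated]] | simp)+
      show "norm (?h x) \<le> 1" for x using hb by simp
    qed
    moreover have "integral\<^sup>L (distr M borel (\<lambda>x. (\<Sum>i<n. Z i x) / sqrt (real n * \<sigma>\<^sup>2))) ?h
        = (\<integral>\<omega>. h ((\<Sum>i<n. \<psi> (X i \<omega>)) / sqrt (real n)) \<partial>M)" for n
    proof -
      have "\<sigma> * ((\<Sum>i<n. Z i x) / sqrt (real n * \<sigma>\<^sup>2)) = (\<Sum>i<n. \<psi> (X i x)) / sqrt (real n)" for x
        using \<sigma>p by (simp add: Z_def real_sqrt_mult)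
      then show ?thesis by (subst integral_distr) auto
    qed
    moreover have "integral\<^sup>L std_normal_distribution ?h = (\<integral>x. h x \<partial>normal_law s2)"
      by (simp add: integral_normal_law \<sigma>_def)
    ultimately show ?thesis by (simp add: s2_def)
  qed
qed

lemma psi_props:
  fixes PX :: "'x measure" and ftheta :: "'t \<Rightarrow> 'f" and d :: "'f \<Rightarrow> 'f \<Rightarrow> real" and fbase :: 'f and M :: nat and fs :: "nat \<Rightarrow> 'f" and gbase :: "'x \<Rightarrow> 'f \<Rightarrow> real" and phi1 :: "'x \<Rightarrow> 'f \<Rightarrow> real"
  assumes PX: "prob_space PX" and M: "M \<ge> 1" and mu0p: "mu0 d fbase M fs > 0"
    and gm: "\<And>m. m < M \<Longrightarrow> (\<lambda>x. gbase x (fs m)) \<in> borel_measurable PX"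
    and gsq: "\<And>m. m < M \<Longrightarrow> integrable PX (\<lambda>x. (gbase x (fs m))\<^sup>2)"
    and grepr: "\<And>m. m < M \<Longrightarrow> d fbase (fs m) = (\<integral>x. gbase x (fs m) \<partial>PX)"
    and pm: "\<And>m. m < M \<Longrightarrow> (\<lambda>x. phi1 x (fs m)) \<in> borel_measurable PX"
    and psq: "\<And>m. m < M \<Longrightarrow> integrable PX (\<lambda>x. (phi1 x (fs m))\<^sup>2)"
    and pmean: "\<And>m. m < M \<Longrightarrow> (\<integral>x. phi1 x (fs m) \<partial>PX) = 0"
  defines "\<Psi> \<equiv> psiM phi1 gbase d ftheta fbase M fs"
    and "\<Phi>0 \<equiv> Phi (phi0 gbase d fbase) M fs"
  shows "\<Psi> \<in> borel_measurable PX" "integrable PX (\<lambda>x. (\<Psi> x)\<^sup>2)" "(\<integral>x. \<Psi> x \<partial>PX) = 0"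
    "var_of PX \<Psi> = (\<integral>x. (\<Psi> x)\<^sup>2 \<partial>PX)"
    "\<Phi>0 \<in> borel_measurable PX" "integrable PX (\<lambda>x. (\<Phi>0 x)\<^sup>2)" "(\<integral>x. \<Phi>0 x \<partial>PX) = 0"
    "\<And>x. Phi phi1 M fs x = mu0 d fbase M fs * \<Psi> x + rM d ftheta fbase M fs * \<Phi>0 x"
proof -
  interpret P: prob_space PX by fact
  define \<Phi>1 where "\<Phi>1 = Phi phi1 M fs"
  define m0 where "m0 = mu0 d fbase M fs"
  define r where "r = rM d ftheta fbase M fs"
  have Mp: "real M > 0" using M by simp
  have gint: "integrable PX (\<lambda>x. gbase x (fs m))" if "m < M" for m
    using gm[OF that] gsq[OF that] by (rule P.square_integrable_imp_integrable)
  have pint: "integrable PX (\<lambda>x. phi1 x (fs m))" if "m < M" for m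
    using pm[OF that] psq[OF that] by (rule P.square_integrable_imp_integrable)
  have cm: "(\<lambda>x. c) \<in> borel_measurable PX" for c :: real by simp
  have csq: "integrable PX (\<lambda>x. c\<^sup>2)" for c :: real by simp
  have \<Phi>1_eq: "\<Phi>1 = (\<lambda>x. inverse (real M) * (\<Sum>m<M. phi1 x (fs m)))"
    by (auto simp: \<Phi>1_def Phi_def field_simps)
  have \<Phi>1m: "\<Phi>1 \<in> borel_measurable PX"
    unfolding \<Phi>1_eq using pm by (intro borel_measurable_times borel_measurable_sum) auto
  have \<Phi>1sq: "integrable PX (\<lambda>x. (\<Phi>1 x)\<^sup>2)"
    unfolding \<Phi>1_eq by (intro sq_int_cmult sq_int_sum) (auto simp: pm psq)
  have \<Phi>1mean: "(\<integral>x. \<Phi>1 x \<partial>PX) = 0"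
    unfolding \<Phi>1_eq using pint pmean by (simp add: Bochner_Integration.integral_sum)
  have \<Phi>0_eq: "\<Phi>0 = (\<lambda>x. inverse (real M) * (\<Sum>m<M. gbase x (fs m) + (- d fbase (fs m))))"
    by (auto simp: \<Phi>0_def Phi_def phi0_def field_simps)
  show \<Phi>0m: "\<Phi>0 \<in> borel_measurable PX"
    unfolding \<Phi>0_eq using gm by (intro borel_measurable_times borel_measurable_sum) auto
  show \<Phi>0sq: "integrable PX (\<lambda>x. (\<Phi>0 x)\<^sup>2)"
    unfolding \<Phi>0_eq
  proof (rule sq_int_cmult, rule sq_int_sum)
    fix m assume "m \<in> {..<M}"
    then have m: "m < M" by simp
    show "(\<lambda>x. gbase x (fs m) + - d fbase (fs m)) \<in> borel_measurable PX"
      using gm[OF m] by simp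
    show "integrable PX (\<lambda>x. (gbase x (fs m) + - d fbase (fs m))\<^sup>2)"
      by (rule sq_int_add) (use gm[OF m] gsq[OF m] in auto)
  qed simp
  have "(\<integral>x. (\<Sum>m<M. gbase x (fs m) + (- d fbase (fs m))) \<partial>PX) = (\<Sum>m<M. (\<integral>x. gbase x (fs m) + (- d fbase (fs m)) \<partial>PX))"
    using gint by (intro Bochner_Integration.integral_sum) auto
  also have "\<dots> = 0"
    using gint grepr by (simp add: P.prob_space)
  finally show \<Phi>0mean: "(\<integral>x. \<Phi>0 x \<partial>PX) = 0"
    unfolding \<Phi>0_eq by simp
  have \<Psi>_eq: "\<Psi> = (\<lambda>x. inverse m0 * (\<Phi>1 x + (- r) * \<Phi>0 x))"
    by (auto simp: \<Psi>_def psiM_def \<Phi>1_def \<Phi>0_def m0_def r_def field_simps)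
  show \<Psi>m: "\<Psi> \<in> borel_measurable PX"
    unfolding \<Psi>_eq using \<Phi>1m \<Phi>0m by measurable
  show \<Psi>sq: "integrable PX (\<lambda>x. (\<Psi> x)\<^sup>2)"
    unfolding \<Psi>_eq by (intro sq_int_cmult sq_int_add \<Phi>1m \<Phi>1sq borel_measurable_times \<Phi>0m borel_measurable_const) (simp add: sq_int_cmult \<Phi>0sq)
  have \<Phi>1int: "integrable PX \<Phi>1" by (rule P.square_integrable_imp_integrable[OF \<Phi>1m \<Phi>1sq])
  have \<Phi>0int: "integrable PX \<Phi>0" by (rule P.square_integrable_imp_integrable[OF \<Phi>0m \<Phi>0sq])
  show \<Psi>mean: "(\<integral>x. \<Psi> x \<partial>PX) = 0"
    unfolding \<Psi>_eq using \<Phi>1int \<Phi>0int \<Phi>1mean \<Phi>0mean by simp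
  show "var_of PX \<Psi> = (\<integral>x. (\<Psi> x)\<^sup>2 \<partial>PX)"
    unfolding var_of_def \<Psi>mean by simp
  show "Phi phi1 M fs x = mu0 d fbase M fs * \<Psi> x + rM d ftheta fbase M fs * \<Phi>0 x" for x
    using mu0p by (simp add: \<Psi>_eq \<Phi>1_def m0_def r_def field_simps)
qed

lemma inv_sqrt_lim: "(\<lambda>n. 1 / sqrt (real n)) \<longlonglongrightarrow> 0"
proof -
  have "(\<lambda>n. sqrt (inverse (real n))) \<longlonglongrightarrow> sqrt 0"
    by (intro tendsto_real_sqrt lim_inverse_n)
  then show ?thesis by (simp add: real_sqrt_inverse divide_inverse)
qed

lemma inv_lim: "(\<lambda>n. 1 / real n) \<longlonglongrightarrow> 0"
  using lim_inverse_n by (simp add: divide_inverse)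

lemma key_identity:
  fixes q m0 r mu1v N D S W \<rho> T Y :: real
  assumes q: "q > 0" and m0: "m0 \<noteq> 0" and mu1v: "mu1v = r * m0"
    and N: "N = mu1v + (m0 * S + r * W) / q\<^sup>2 + \<rho> / q"
    and D: "D = m0 + W / q\<^sup>2" and Dnz: "D \<noteq> 0"
  shows "q * (N / D - r) - S / q = (\<rho> - S * W / (q\<^sup>2 * q)) / D"
proof -
  have "N - r * D = m0 * S / q\<^sup>2 + \<rho> / q"
    using q by (simp add: N D mu1v field_simps)
  then have "N / D - r = (m0 * S / q\<^sup>2 + \<rho> / q) / D"
    using Dnz by (simp add: field_simps)
  moreover have e: "q * (m0 * S / q\<^sup>2 + \<rho> / q) = m0 * S / q + \<rho>"
    using q by (simp add: field_simps power2_eq_square)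
  ultimately have "q * (N / D - r) = (m0 * S / q + \<rho>) / D"
    by (metis times_divide_eq_right)
  then have "q * (N / D - r) - S / q = (m0 * S / q + \<rho>) / D - S / q"
    by simp
  also have "\<dots> = (m0 * S / q + \<rho> - S * D / q) / D"
    using Dnz by (simp add: field_simps)
  also have "m0 * S / q + \<rho> - S * D / q = \<rho> - S * W / (q\<^sup>2 * q)"
    using q by (simp add: D field_simps power2_eq_square)
  finally show ?thesis .
qed

lemma main_fixed:
  fixes PX :: "'x measure" and \<Omega> :: "'w measure"
    and d :: "'f \<Rightarrow> 'f \<Rightarrow> real" and ftheta :: "'t \<Rightarrow> 'f" and fbase :: 'f
    and g :: "'x \<Rightarrow> 't \<Rightarrow> 'f \<Rightarrow> real" and gbase :: "'x \<Rightarrow> 'f \<Rightarrow> real"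
    and phi1 :: "'x \<Rightarrow> 'f \<Rightarrow> real" and X :: "nat \<Rightarrow> 'w \<Rightarrow> 'x" and M :: nat
    and fs :: "nat \<Rightarrow> 'f"
  assumes Omega: "prob_space \<Omega>" and PX: "prob_space PX"
    and indep: "prob_space.indep_vars \<Omega> (\<lambda>_. PX) X UNIV"
    and ident: "\<forall>i. distr \<Omega> PX (X i) = PX"
    and M: "M \<ge> 1" and mu0p: "mu0 d fbase M fs > 0"
    and gm: "\<And>m. m < M \<Longrightarrow> (\<lambda>x. gbase x (fs m)) \<in> borel_measurable PX"
    and gsq: "\<And>m. m < M \<Longrightarrow> integrable PX (\<lambda>x. (gbase x (fs m))\<^sup>2)"
    and grepr: "\<And>m. m < M \<Longrightarrow> d fbase (fs m) = (\<integral>x. gbase x (fs m) \<partial>PX)"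
    and pm: "\<And>m. m < M \<Longrightarrow> (\<lambda>x. phi1 x (fs m)) \<in> borel_measurable PX"
    and psq: "\<And>m. m < M \<Longrightarrow> integrable PX (\<lambda>x. (phi1 x (fs m))\<^sup>2)"
    and pmean: "\<And>m. m < M \<Longrightarrow> (\<integral>x. phi1 x (fs m) \<partial>PX) = 0"
    and dnFm: "\<And>m n. m < M \<Longrightarrow> dnF g X n (fs m) \<in> borel_measurable \<Omega>"
    and Rconv: "\<And>m. m < M \<Longrightarrow> conv_in_prob \<Omega>
            (\<lambda>n \<omega>. sqrt (real n) * (dnF g X n (fs m) \<omega> - dF d ftheta (fs m)
                                      - (\<Sum>i<n. phi1 (X i \<omega>) (fs m)) / real n)) 0"
  shows "conv_in_distr \<Omega>
             (\<lambda>n \<omega>. sqrt (real n) * (rhat g gbase X M fs n \<omega> - rM d ftheta fbase M fs))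
             (normal_law (var_of PX (psiM phi1 gbase d ftheta fbase M fs)))"
proof -
  interpret prob_space \<Omega> by fact
  interpret P: prob_space PX by fact
  have Xm[measurable]: "X i \<in> measurable \<Omega> PX" for i
    using indep unfolding indep_vars_def2 by auto
  define \<Psi> where "\<Psi> = psiM phi1 gbase d ftheta fbase M fs"
  define \<Phi>0 where "\<Phi>0 = Phi (phi0 gbase d fbase) M fs"
  define \<Phi>1 where "\<Phi>1 = Phi phi1 M fs"
  define m0 where "m0 = mu0 d fbase M fs"
  define r where "r = rM d ftheta fbase M fs"
  define mu1v where "mu1v = mu1 d ftheta M fs"
  note PPa = PX M mu0p gm gsq grepr pm psq pmean
  have \<Psi>m[measurable]: "\<Psi> \<in> borel_measurable PX" unfolding \<Psi>_def using PPa by (rule psi_props(1))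
  have \<Psi>sq: "integrable PX (\<lambda>x. (\<Psi> x)\<^sup>2)" unfolding \<Psi>_def using PPa by (rule psi_props(2))
  have \<Psi>mean: "(\<integral>x. \<Psi> x \<partial>PX) = 0" unfolding \<Psi>_def using PPa by (rule psi_props(3))
  have \<Psi>var: "var_of PX \<Psi> = (\<integral>x. (\<Psi> x)\<^sup>2 \<partial>PX)" unfolding \<Psi>_def using PPa by (rule psi_props(4))
  have \<Phi>0m[measurable]: "\<Phi>0 \<in> borel_measurable PX" unfolding \<Phi>0_def using PPa by (rule psi_props(5))
  have \<Phi>0sq: "integrable PX (\<lambda>x. (\<Phi>0 x)\<^sup>2)" unfolding \<Phi>0_def using PPa by (rule psi_props(6))
  have \<Phi>0mean: "(\<integral>x. \<Phi>0 x \<partial>PX) = 0" unfolding \<Phi>0_def using PPa by (rule psi_props(7))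
  have \<Phi>1eq: "\<Phi>1 x = m0 * \<Psi> x + r * \<Phi>0 x" for x
    unfolding \<Phi>1_def \<Psi>_def \<Phi>0_def m0_def r_def using PPa by (rule psi_props(8))
  have m0p: "m0 > 0" using mu0p by (simp add: m0_def)
  have Mp: "real M > 0" using M by simp
  have mu1v: "mu1v = r * m0" using m0p by (simp add: r_def rM_def mu1v_def m0_def)

  define S where "S n \<omega> = (\<Sum>i<n. \<Psi> (X i \<omega>))" for n \<omega>
  define W where "W n \<omega> = (\<Sum>i<n. \<Phi>0 (X i \<omega>))" for n \<omega>
  define T where "T n \<omega> = S n \<omega> / sqrt (real n)" for n \<omega>
  define R where "R m n \<omega> = sqrt (real n) * (dnF g X n (fs m) \<omega> - dF d ftheta (fs m)
                                      - (\<Sum>i<n. phi1 (X i \<omega>) (fs m)) / real n)" for m n \<omega>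
  define \<rho> where "\<rho> n \<omega> = (\<Sum>m<M. R m n \<omega>) / real M" for n \<omega>
  define N where "N n \<omega> = (\<Sum>m<M. dnF g X n (fs m) \<omega>) / real M" for n \<omega>
  define D where "D n \<omega> = (\<Sum>m<M. dn_base gbase X n (fs m) \<omega>) / real M" for n \<omega>
  define Y where "Y n \<omega> = sqrt (real n) * (rhat g gbase X M fs n \<omega> - r)" for n \<omega>

  have Sm[measurable]: "S n \<in> borel_measurable \<Omega>" for n unfolding S_def by measurable
  have Wm[measurable]: "W n \<in> borel_measurable \<Omega>" for n unfolding W_def by measurable
  have Tm[measurable]: "T n \<in> borel_measurable \<Omega>" for n unfolding T_def by measurable
  have phiXm: "(\<lambda>\<omega>. phi1 (X i \<omega>) (fs m)) \<in> borel_measurable \<Omega>" if "m < M" for i m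
    using measurable_compose[OF Xm pm[OF that]] .
  have gXm: "(\<lambda>\<omega>. gbase (X i \<omega>) (fs m)) \<in> borel_measurable \<Omega>" if "m < M" for i m
    using measurable_compose[OF Xm gm[OF that]] .
  have Rm[measurable]: "R m n \<in> borel_measurable \<Omega>" if "m < M" for m n
    unfolding R_def using dnFm[OF that] phiXm[OF that]
    by (intro borel_measurable_times borel_measurable_diff borel_measurable_divide borel_measurable_sum borel_measurable_const) auto
  have \<rho>m[measurable]: "\<rho> n \<in> borel_measurable \<Omega>" for n
    unfolding \<rho>_def using Rm by (intro borel_measurable_divide borel_measurable_sum borel_measurable_const) auto
  have Nm[measurable]: "N n \<in> borel_measurable \<Omega>" for n
    unfolding N_def using dnFm by (intro borel_measurable_divide borel_measurable_sum borel_measurable_const) auto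
  have Dm[measurable]: "D n \<in> borel_measurable \<Omega>" for n
    unfolding D_def dn_base_def using gXm by (intro borel_measurable_divide borel_measurable_sum borel_measurable_const) auto
  have Yeq: "Y n \<omega> = sqrt (real n) * (N n \<omega> / D n \<omega> - r)" for n \<omega>
    unfolding Y_def rhat_def N_def D_def ..
  have Ym[measurable]: "Y n \<in> borel_measurable \<Omega>" for n
    unfolding Yeq[abs_def] by measurable

  have conv: "(\<lambda>n. \<integral>\<omega>. h (T n \<omega>) \<partial>\<Omega>) \<longlonglongrightarrow> (\<integral>x. h x \<partial>normal_law (var_of PX \<Psi>))"
    if hc: "\<And>x. isCont h x" and hb: "\<And>x. \<bar>h x\<bar> \<le> 1" for h :: "real \<Rightarrow> real"
    using clt_psi[OF indep ident \<Psi>m \<Psi>sq \<Psi>mean hc hb] unfolding \<Psi>var T_def S_def .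

  have small: "conv_in_prob \<Omega> (\<lambda>n \<omega>. Y n \<omega> - T n \<omega>) 0"
    unfolding conv_in_prob_def
  proof (intro allI impI)
    fix e :: real assume e: "e > 0"
    define \<tau>2 where "\<tau>2 = (\<integral>x. (\<Phi>0 x)\<^sup>2 \<partial>PX)"
    define \<sigma>2 where "\<sigma>2 = (\<integral>x. (\<Psi> x)\<^sup>2 \<partial>PX)"
    define b where "b n = sqrt (e * m0 * sqrt (real n) / 4 * real n)" for n :: nat
    define E1 where "E1 n = {\<omega> \<in> space \<Omega>. m0 * real n / 2 < \<bar>W n \<omega>\<bar>}" for n
    define E2 where "E2 n = {\<omega> \<in> space \<Omega>. b n < \<bar>S n \<omega>\<bar>}" for n
    define E3 where "E3 n = {\<omega> \<in> space \<Omega>. b n < \<bar>W n \<omega>\<bar>}" for n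
    define E4 where "E4 m n = {\<omega> \<in> space \<Omega>. e * m0 / 4 < \<bar>R m n \<omega> - 0\<bar>}" for m n
    have E1s: "E1 n \<in> sets \<Omega>" for n unfolding E1_def by measurable
    have E2s: "E2 n \<in> sets \<Omega>" for n unfolding E2_def by measurable
    have E3s: "E3 n \<in> sets \<Omega>" for n unfolding E3_def by measurable
    have E4s: "E4 m n \<in> sets \<Omega>" if "m < M" for m n
      using Rm[OF that, of n] unfolding E4_def by measurable
    have Wsq: "integrable \<Omega> (\<lambda>\<omega>. (W n \<omega>)\<^sup>2)" and WE: "expectation (\<lambda>\<omega>. (W n \<omega>)\<^sup>2) = real n * \<tau>2" for n
      using iid_sum_sq[OF indep ident \<Phi>0m \<Phi>0sq \<Phi>0mean] unfolding W_def \<tau>2_def by auto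
    have Ssq: "integrable \<Omega> (\<lambda>\<omega>. (S n \<omega>)\<^sup>2)" and SE: "expectation (\<lambda>\<omega>. (S n \<omega>)\<^sup>2) = real n * \<sigma>2" for n
      using iid_sum_sq[OF indep ident \<Psi>m \<Psi>sq \<Psi>mean] unfolding S_def \<sigma>2_def by auto
    have b2: "(b n)\<^sup>2 = e * m0 * sqrt (real n) / 4 * real n" for n
      unfolding b_def using e m0p by simp
    have bpos: "b n > 0" if "n > 0" for n
      unfolding b_def using e m0p that by simp
    have em0: "e * m0 > 0" using e m0p by simp

    have P1: "measure \<Omega> (E1 n) \<le> (4 * \<tau>2 / m0\<^sup>2) * (1 / real n)" if n: "n > 0" for n
    proof -
      have "measure \<Omega> (E1 n) \<le> expectation (\<lambda>\<omega>. (W n \<omega>)\<^sup>2) / (m0 * real n / 2)\<^sup>2"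
        unfolding E1_def by (rule cheb_simple) (use Wsq m0p n in auto)
      also have "\<dots> = (4 * \<tau>2 / m0\<^sup>2) * (1 / real n)"
        using n m0p unfolding WE by (simp add: field_simps power2_eq_square)
      finally show ?thesis .
    qed
    have P2: "measure \<Omega> (E2 n) \<le> (4 * \<sigma>2 / (e * m0)) * (1 / sqrt (real n))" if n: "n > 0" for n
    proof -
      have "measure \<Omega> (E2 n) \<le> expectation (\<lambda>\<omega>. (S n \<omega>)\<^sup>2) / (b n)\<^sup>2"
        unfolding E2_def by (rule cheb_simple) (use Ssq bpos n in auto)
      also have "\<dots> = (4 * \<sigma>2 / (e * m0)) * (1 / sqrt (real n))"
        using n em0 unfolding SE b2 by (simp add: field_simps)
      finally show ?thesis .
    qed
    have P3: "measure \<Omega> (E3 n) \<le> (4 * \<tau>2 / (e * m0)) * (1 / sqrt (real n))" if n: "n > 0" for n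
    proof -
      have "measure \<Omega> (E3 n) \<le> expectation (\<lambda>\<omega>. (W n \<omega>)\<^sup>2) / (b n)\<^sup>2"
        unfolding E3_def by (rule cheb_simple) (use Wsq bpos n in auto)
      also have "\<dots> = (4 * \<tau>2 / (e * m0)) * (1 / sqrt (real n))"
        using n em0 unfolding WE b2 by (simp add: field_simps)
      finally show ?thesis .
    qed

    have Aeq: "N n \<omega> = mu1v + (m0 * S n \<omega> + r * W n \<omega>) / (sqrt (real n))\<^sup>2 + \<rho> n \<omega> / sqrt (real n)"
      if n: "n > 0" for n \<omega>
    proof -
      define q where "q = sqrt (real n)"
      have q: "q > 0" using n by (simp add: q_def)
      have hq: "real n = q\<^sup>2" using n by (simp add: q_def)
      have dn_eq: "dnF g X n (fs m) \<omega> = dF d ftheta (fs m) + (\<Sum>i<n. phi1 (X i \<omega>) (fs m)) / real n + R m n \<omega> / q" for m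
        using q unfolding R_def q_def[symmetric] by (simp add: field_simps)
      have s1: "(\<Sum>m<M. dnF g X n (fs m) \<omega>) = (\<Sum>m<M. dF d ftheta (fs m))
              + (\<Sum>m<M. (\<Sum>i<n. phi1 (X i \<omega>) (fs m)) / real n) + (\<Sum>m<M. R m n \<omega>) / q"
        by (simp add: dn_eq sum.distrib sum_divide_distrib)
      have "(\<Sum>m<M. (\<Sum>i<n. phi1 (X i \<omega>) (fs m)) / real n) = (\<Sum>m<M. \<Sum>i<n. phi1 (X i \<omega>) (fs m)) / real n"
        by (simp add: sum_divide_distrib)
      also have "(\<Sum>m<M. \<Sum>i<n. phi1 (X i \<omega>) (fs m)) = (\<Sum>i<n. \<Sum>m<M. phi1 (X i \<omega>) (fs m))"
        by (rule sum.swap)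
      also have "\<dots> = (\<Sum>i<n. real M * \<Phi>1 (X i \<omega>))"
        using Mp by (simp add: \<Phi>1_def Phi_def)
      also have "\<dots> = real M * (\<Sum>i<n. \<Phi>1 (X i \<omega>))"
        by (simp add: sum_distrib_left)
      finally have s2: "(\<Sum>m<M. (\<Sum>i<n. phi1 (X i \<omega>) (fs m)) / real n) = real M * (\<Sum>i<n. \<Phi>1 (X i \<omega>)) / real n" .
      have s3: "(\<Sum>i<n. \<Phi>1 (X i \<omega>)) = m0 * S n \<omega> + r * W n \<omega>"
        by (simp add: \<Phi>1eq sum.distrib sum_distrib_left S_def W_def)
      show ?thesis
        unfolding N_def s1 s2 s3 mu1v_def mu1_def \<rho>_def q_def[symmetric] hq[symmetric]
        using Mp q n by (simp add: field_simps)
    qed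
    have Beq: "D n \<omega> = m0 + W n \<omega> / (sqrt (real n))\<^sup>2" if n: "n > 0" for n \<omega>
    proof -
      have hq: "(sqrt (real n))\<^sup>2 = real n" by simp
      have db: "dn_base gbase X n (fs m) \<omega> = (\<Sum>i<n. phi0 gbase d fbase (X i \<omega>) (fs m)) / real n + d fbase (fs m)" for m
        unfolding dn_base_def phi0_def using n by (simp add: sum_subtractf field_simps)
      have s1: "(\<Sum>m<M. dn_base gbase X n (fs m) \<omega>) = (\<Sum>m<M. (\<Sum>i<n. phi0 gbase d fbase (X i \<omega>) (fs m)) / real n) + (\<Sum>m<M. d fbase (fs m))"
        by (simp add: db sum.distrib)
      have "(\<Sum>m<M. (\<Sum>i<n. phi0 gbase d fbase (X i \<omega>) (fs m)) / real n) = (\<Sum>m<M. \<Sum>i<n. phi0 gbase d fbase (X i \<omega>) (fs m)) / real n"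
        by (simp add: sum_divide_distrib)
      also have "(\<Sum>m<M. \<Sum>i<n. phi0 gbase d fbase (X i \<omega>) (fs m)) = (\<Sum>i<n. \<Sum>m<M. phi0 gbase d fbase (X i \<omega>) (fs m))"
        by (rule sum.swap)
      also have "\<dots> = (\<Sum>i<n. real M * \<Phi>0 (X i \<omega>))"
        using Mp by (simp add: \<Phi>0_def Phi_def)
      also have "\<dots> = real M * W n \<omega>"
        by (simp add: sum_distrib_left W_def)
      finally have s2: "(\<Sum>m<M. (\<Sum>i<n. phi0 gbase d fbase (X i \<omega>) (fs m)) / real n) = real M * W n \<omega> / real n" .
      show ?thesis
        unfolding D_def s1 s2 hq m0_def mu0_def
        using Mp n by (simp add: field_simps)
    qed

    have incl: "{\<omega> \<in> space \<Omega>. e < \<bar>Y n \<omega> - T n \<omega> - 0\<bar>} \<subseteq> E1 n \<union> E2 n \<union> E3 n \<union> (\<Union>m<M. E4 m n)"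
      if n: "n > 0" for n
    proof
      fix \<omega> assume "\<omega> \<in> {\<omega> \<in> space \<Omega>. e < \<bar>Y n \<omega> - T n \<omega> - 0\<bar>}"
      then have \<omega>: "\<omega> \<in> space \<Omega>" and big: "e < \<bar>Y n \<omega> - T n \<omega>\<bar>" by auto
      show "\<omega> \<in> E1 n \<union> E2 n \<union> E3 n \<union> (\<Union>m<M. E4 m n)"
      proof (rule ccontr)
        assume "\<omega> \<notin> E1 n \<union> E2 n \<union> E3 n \<union> (\<Union>m<M. E4 m n)"
        then have h1: "\<bar>W n \<omega>\<bar> \<le> m0 * real n / 2" and h2: "\<bar>S n \<omega>\<bar> \<le> b n"
          and h3: "\<bar>W n \<omega>\<bar> \<le> b n" and h4: "\<And>m. m < M \<Longrightarrow> \<bar>R m n \<omega>\<bar> \<le> e * m0 / 4"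
          using \<omega> by (auto simp: E1_def E2_def E3_def E4_def not_less)
        define q where "q = sqrt (real n)"
        have q: "q > 0" using n by (simp add: q_def)
        have hq: "q\<^sup>2 = real n" by (simp add: q_def)
        have hW: "\<bar>W n \<omega> / q\<^sup>2\<bar> \<le> m0 / 2"
          using h1 n by (simp add: hq abs_divide field_simps)
        have DD: "D n \<omega> = m0 + W n \<omega> / q\<^sup>2" using Beq[OF n] unfolding q_def .
        have Dge: "D n \<omega> \<ge> m0 / 2" using hW DD by linarith
        have Dnz: "D n \<omega> \<noteq> 0" using Dge m0p by linarith
        have NN: "N n \<omega> = mu1v + (m0 * S n \<omega> + r * W n \<omega>) / q\<^sup>2 + \<rho> n \<omega> / q"
          using Aeq[OF n] unfolding q_def .
        have key: "q * (N n \<omega> / D n \<omega> - r) - S n \<omega> / q = (\<rho> n \<omega> - S n \<omega> * W n \<omega> / (q\<^sup>2 * q)) / D n \<omega>"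
          by (rule key_identity[OF q _ mu1v NN DD Dnz]) (use m0p in simp)
        have YT: "Y n \<omega> - T n \<omega> = (\<rho> n \<omega> - S n \<omega> * W n \<omega> / (q\<^sup>2 * q)) / D n \<omega>"
          using key unfolding Yeq T_def q_def .
        have "\<bar>\<Sum>m<M. R m n \<omega>\<bar> \<le> (\<Sum>m<M. \<bar>R m n \<omega>\<bar>)" by (rule sum_abs)
        also have "\<dots> \<le> real (card {..<M}) * (e * m0 / 4)"
          by (rule sum_bounded_above) (use h4 in auto)
        finally have "\<bar>\<Sum>m<M. R m n \<omega>\<bar> \<le> real M * (e * m0 / 4)" by simp
        then have h\<rho>: "\<bar>\<rho> n \<omega>\<bar> \<le> e * m0 / 4"
          using Mp by (simp add: \<rho>_def abs_divide field_simps)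
        have "\<bar>S n \<omega> * W n \<omega>\<bar> \<le> b n * b n"
          unfolding abs_mult by (rule mult_mono) (use h2 h3 in auto)
        also have "\<dots> = e * m0 * q / 4 * real n" using b2[of n] by (simp add: power2_eq_square q_def)
        finally have hSW0: "\<bar>S n \<omega> * W n \<omega>\<bar> \<le> e * m0 * q / 4 * real n" .
        have "\<bar>S n \<omega> * W n \<omega> / (q\<^sup>2 * q)\<bar> = \<bar>S n \<omega> * W n \<omega>\<bar> / (real n * q)"
          using q by (simp add: hq abs_divide)
        also have "\<dots> \<le> (e * m0 * q / 4 * real n) / (real n * q)"
          using hSW0 q n by (intro divide_right_mono) auto
        also have "\<dots> = e * m0 / 4" using q n by (simp add: field_simps)
        finally have hSW: "\<bar>S n \<omega> * W n \<omega> / (q\<^sup>2 * q)\<bar> \<le> e * m0 / 4" .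
        have num: "\<bar>\<rho> n \<omega> - S n \<omega> * W n \<omega> / (q\<^sup>2 * q)\<bar> \<le> e * m0 / 2"
          using h\<rho> hSW by linarith
        have "\<bar>Y n \<omega> - T n \<omega>\<bar> = \<bar>\<rho> n \<omega> - S n \<omega> * W n \<omega> / (q\<^sup>2 * q)\<bar> / D n \<omega>"
          using Dge m0p unfolding YT by (simp add: abs_divide)
        also have "\<dots> \<le> (e * m0 / 2) / (m0 / 2)"
          using num Dge m0p e by (intro frac_le) auto
        also have "\<dots> = e" using m0p by simp
        finally show False using big by simp
      qed
    qed

    define u where "u n = (4 * \<tau>2 / m0\<^sup>2) * (1 / real n) + (4 * \<sigma>2 / (e * m0)) * (1 / sqrt (real n))
        + (4 * \<tau>2 / (e * m0)) * (1 / sqrt (real n)) + (\<Sum>m<M. measure \<Omega> (E4 m n))" for n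
    have bound: "measure \<Omega> {\<omega> \<in> space \<Omega>. e < \<bar>Y n \<omega> - T n \<omega> - 0\<bar>} \<le> u n" if n: "n > 0" for n
    proof -
      have U4: "(\<Union>m<M. E4 m n) \<in> sets \<Omega>" using E4s by auto
      have "measure \<Omega> {\<omega> \<in> space \<Omega>. e < \<bar>Y n \<omega> - T n \<omega> - 0\<bar>}
            \<le> measure \<Omega> (E1 n \<union> E2 n \<union> E3 n \<union> (\<Union>m<M. E4 m n))"
        by (rule finite_measure_mono[OF incl[OF n]]) (use E1s E2s E3s U4 in auto)
      also have "\<dots> \<le> measure \<Omega> (E1 n \<union> E2 n \<union> E3 n) + measure \<Omega> (\<Union>m<M. E4 m n)"
        by (rule measure_Un_le) (use E1s E2s E3s U4 in auto)
      also have "measure \<Omega> (E1 n \<union> E2 n \<union> E3 n) \<le> measure \<Omega> (E1 n \<union> E2 n) + measure \<Omega> (E3 n)"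
        by (rule measure_Un_le) (use E1s E2s E3s in auto)
      also have "measure \<Omega> (E1 n \<union> E2 n) \<le> measure \<Omega> (E1 n) + measure \<Omega> (E2 n)"
        by (rule measure_Un_le) (use E1s E2s in auto)
      also have "measure \<Omega> (\<Union>m<M. E4 m n) \<le> (\<Sum>m<M. measure \<Omega> (E4 m n))"
        by (rule measure_UNION_le) (use E4s in auto)
      finally show ?thesis
        using P1[OF n] P2[OF n] P3[OF n] unfolding u_def by linarith
    qed
    have E4lim: "(\<lambda>n. measure \<Omega> (E4 m n)) \<longlonglongrightarrow> 0" if m: "m < M" for m
    proof -
      have "e * m0 / 4 > 0" using em0 by simp
      then show ?thesis
        using Rconv[OF m] unfolding conv_in_prob_def E4_def R_def by blast
    qed
    have ulim: "u \<longlonglongrightarrow> 0"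
    proof -
      have "(\<lambda>n. (4 * \<tau>2 / m0\<^sup>2) * (1 / real n) + (4 * \<sigma>2 / (e * m0)) * (1 / sqrt (real n))
        + (4 * \<tau>2 / (e * m0)) * (1 / sqrt (real n)) + (\<Sum>m<M. measure \<Omega> (E4 m n))) \<longlonglongrightarrow> 0 + 0 + 0 + 0"
        by (intro tendsto_add tendsto_mult_right_zero inv_lim inv_sqrt_lim tendsto_null_sum E4lim) auto
      then show ?thesis unfolding u_def[abs_def] by simp
    qed
    show "(\<lambda>n. measure \<Omega> {\<omega> \<in> space \<Omega>. \<bar>Y n \<omega> - T n \<omega> - 0\<bar> > e}) \<longlonglongrightarrow> 0"
    proof (rule tendsto_sandwich[OF _ _ tendsto_const ulim])
      show "\<forall>\<^sub>F n in sequentially. 0 \<le> measure \<Omega> {\<omega> \<in> space \<Omega>. \<bar>Y n \<omega> - T n \<omega> - 0\<bar> > e}"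
        by simp
      show "\<forall>\<^sub>F n in sequentially. measure \<Omega> {\<omega> \<in> space \<Omega>. \<bar>Y n \<omega> - T n \<omega> - 0\<bar> > e} \<le> u n"
        using bound by (intro eventually_sequentiallyI[of 1]) auto
    qed
  qed

  have "conv_in_distr \<Omega> Y (normal_law (var_of PX \<Psi>))"
    by (rule slutsky[OF Omega normal_law_rd Tm Ym conv small])
  then show ?thesis unfolding Y_def \<Psi>_def r_def .
qed

theorem theorem1:
  fixes PX :: "'x measure" and lamF :: "'f measure" and \<Omega> :: "'w measure"
    and d :: "'f \<Rightarrow> 'f \<Rightarrow> real" and ftheta :: "'t \<Rightarrow> 'f" and fbase :: 'f
    and g :: "'x \<Rightarrow> 't \<Rightarrow> 'f \<Rightarrow> real" and gbase :: "'x \<Rightarrow> 'f \<Rightarrow> real"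
    and phi1 :: "'x \<Rightarrow> 'f \<Rightarrow> real" and X :: "nat \<Rightarrow> 'w \<Rightarrow> 'x" and M :: nat
  assumes PX: "prob_space PX" and lamF: "prob_space lamF" and Omega: "prob_space \<Omega>"
    and meas_g: "\<forall>\<theta> f. (\<lambda>x. g x \<theta> f) \<in> borel_measurable PX"
    and meas_gbase: "\<forall>f. (\<lambda>x. gbase x f) \<in> borel_measurable PX"
    and repr: "AE f in lamF. (\<forall>\<theta>. d (ftheta \<theta>) f = (\<integral>x. g x \<theta> f \<partial>PX))
                             \<and> d fbase f = (\<integral>x. gbase x f \<partial>PX)"
    and moments: "\<exists>\<epsilon>>0. \<exists>C. AE f in lamF.
        (\<forall>\<theta>. integrable PX (\<lambda>x. \<bar>g x \<theta> f\<bar> powr (2 + \<epsilon>))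
             \<and> (\<integral>x. \<bar>g x \<theta> f\<bar> powr (2 + \<epsilon>) \<partial>PX) \<le> C)
        \<and> integrable PX (\<lambda>x. \<bar>gbase x f\<bar> powr (2 + \<epsilon>))
        \<and> (\<integral>x. \<bar>gbase x f\<bar> powr (2 + \<epsilon>) \<partial>PX) \<le> C"
    and indep: "prob_space.indep_vars \<Omega> (\<lambda>_. PX) X UNIV"
    and ident: "\<forall>i. distr \<Omega> PX (X i) = PX"
    and meas_dnF: "AE f in lamF. \<forall>n. dnF g X n f \<in> borel_measurable \<Omega>"
    and asym_lin: "AE f in lamF.
        (\<lambda>x. phi1 x f) \<in> borel_measurable PX
        \<and> integrable PX (\<lambda>x. phi1 x f) \<and> (\<integral>x. phi1 x f \<partial>PX) = 0
        \<and> integrable PX (\<lambda>x. (phi1 x f)\<^sup>2)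
        \<and> conv_in_prob \<Omega>
            (\<lambda>n \<omega>. sqrt (real n) * (dnF g X n f \<omega> - dF d ftheta f
                                      - (\<Sum>i<n. phi1 (X i \<omega>) f) / real n)) 0"
    and M: "M \<ge> 1"
  shows "AE fs in PiM {..<M} (\<lambda>_. lamF).
           mu0 d fbase M fs > 0 \<longrightarrow>
           conv_in_distr \<Omega>
             (\<lambda>n \<omega>. sqrt (real n) * (rhat g gbase X M fs n \<omega> - rM d ftheta fbase M fs))
             (normal_law (var_of PX (psiM phi1 gbase d ftheta fbase M fs)))"
proof -
  obtain \<epsilon> C where \<epsilon>: "\<epsilon> > 0" and mom: "AE f in lamF.
        (\<forall>\<theta>. integrable PX (\<lambda>x. \<bar>g x \<theta> f\<bar> powr (2 + \<epsilon>))
             \<and> (\<integral>x. \<bar>g x \<theta> f\<bar> powr (2 + \<epsilon>) \<partial>PX) \<le> C)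
        \<and> integrable PX (\<lambda>x. \<bar>gbase x f\<bar> powr (2 + \<epsilon>))
        \<and> (\<integral>x. \<bar>gbase x f\<bar> powr (2 + \<epsilon>) \<partial>PX) \<le> C"
    using moments by blast
  define Good where "Good f \<longleftrightarrow> d fbase f = (\<integral>x. gbase x f \<partial>PX)
      \<and> integrable PX (\<lambda>x. \<bar>gbase x f\<bar> powr (2 + \<epsilon>))
      \<and> (\<forall>n. dnF g X n f \<in> borel_measurable \<Omega>)
      \<and> (\<lambda>x. phi1 x f) \<in> borel_measurable PX
      \<and> (\<integral>x. phi1 x f \<partial>PX) = 0
      \<and> integrable PX (\<lambda>x. (phi1 x f)\<^sup>2)
      \<and> conv_in_prob \<Omega>
            (\<lambda>n \<omega>. sqrt (real n) * (dnF g X n f \<omega> - dF d ftheta f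
                                      - (\<Sum>i<n. phi1 (X i \<omega>) f) / real n)) 0" for f
  have AEgood: "AE f in lamF. Good f"
    using repr mom meas_dnF asym_lin unfolding Good_def by eventually_elim auto
  have "AE fs in PiM {..<M} (\<lambda>_. lamF). \<forall>m\<in>{..<M}. Good (fs m)"
    by (rule eventually_ball_finite) (auto intro!: AE_PiM_component lamF AEgood)
  then show ?thesis
  proof eventually_elim
    case (elim fs)
    then have G: "\<And>m. m < M \<Longrightarrow> Good (fs m)" by auto
    show ?case
    proof
      assume mu0p: "mu0 d fbase M fs > 0"
      have fmPX: "finite_measure PX" using PX by (simp add: prob_space_def)
      show "conv_in_distr \<Omega>
             (\<lambda>n \<omega>. sqrt (real n) * (rhat g gbase X M fs n \<omega> - rM d ftheta fbase M fs))
             (normal_law (var_of PX (psiM phi1 gbase d ftheta fbase M fs)))"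
      proof (rule main_fixed[OF Omega PX indep ident M mu0p])
        fix m assume m: "m < M"
        note Gm = G[OF m, unfolded Good_def]
        show gm: "(\<lambda>x. gbase x (fs m)) \<in> borel_measurable PX" using meas_gbase by simp
        show "integrable PX (\<lambda>x. (gbase x (fs m))\<^sup>2)"
          by (rule powr_sq_int[OF gm fmPX _ \<epsilon>]) (use Gm in auto)
        show "d fbase (fs m) = (\<integral>x. gbase x (fs m) \<partial>PX)" using Gm by auto
        show "(\<lambda>x. phi1 x (fs m)) \<in> borel_measurable PX" using Gm by auto
        show "integrable PX (\<lambda>x. (phi1 x (fs m))\<^sup>2)" using Gm by auto
        show "(\<integral>x. phi1 x (fs m) \<partial>PX) = 0" using Gm by auto
        show "dnF g X n (fs m) \<in> borel_measurable \<Omega>" for n using Gm by auto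
        show "conv_in_prob \<Omega>
            (\<lambda>n \<omega>. sqrt (real n) * (dnF g X n (fs m) \<omega> - dF d ftheta (fs m)
                                      - (\<Sum>i<n. phi1 (X i \<omega>) (fs m)) / real n)) 0"
          using Gm by auto
      qed
    qed
  qed
qed

end
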